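(* Let $d,\mathfrak d,M\in\mathbb N$, $R,L,\mathcal R,\varepsilon\in(0,\infty)$, let $D\subseteq\mathbb R^d$ be compact, let $(\Omega,\mathcal F,\mathbb P)$ be a probability space, let $X_m\colon\Omega\to D$ and $Y_m\colon\Omega\to\mathbb R$, $m\in\{1,\dots,M\}$, be functions such that $(X_m,Y_m)$, $m\in\{1,\dots,M\}$, are i.i.d. random variables, let $H=(H_\theta)_{\theta\in[-R,R]^{\mathfrak d}}\colon[-R,R]^{\mathfrak d}\to C(D,\mathbb R)$ satisfy $|H_\theta(x)-H_\vartheta(x)|\le L\|\theta-\vartheta\|_\infty$ for all $\theta,\vartheta\in[-R,R]^{\mathfrak d}$, $x\in D$, assume $|H_\theta(X_m)-Y_m|\le\mathcal R$ for all $\theta\in[-R,R]^{\mathfrak d}$, $m\in\{1,\dots,M\}$ and $\mathbb E[|Y_1|^2]<\infty$, let $\mathcal E(f)=\mathbb E[|f(X_1)-Y_1|^2]$ for $f\in C(D,\mathbb R)$, and let $\mathfrak E(\theta,\omega)=\frac1M\sum_{m=1}^M|H_\theta(X_m(\omega))-Y_m(\omega)|^2$ for $\theta\in[-R,R]^{\mathfrak d}$, $\omega\in\Omega$. Then $\Omega\ni\omega\mapsto\sup_{\theta\in[-R,R]^{\mathfrak d}}|\mathfrak E(\theta,\omega)-\mathcal E(H_\theta)|\in[0,\infty]$ is $\mathcal F/\mathcal B([0,\infty])$-measurable and $$\mathbb P\bigl(\sup_{\theta\in[-R,R]^{\mathfrak d}}|\mathfrak E(\theta)-\mathcal E(H_\theta)|\ge\varepsilon\bigr)\le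 2\max\Bigl\{1,\Bigl[\frac{32LR\mathcal R}{\varepsilon}\Bigr]^{\mathfrak d}\Bigr\}\exp\Bigl(\frac{-\varepsilon^2M}{2\mathcal R^4}\Bigr).$$
   Context: $\|\cdot\|_\infty$ is the maximum norm on $\mathbb R^{\mathfrak d}$. *)

theory Defs
  imports "HOL-Probability.Probability"
begin

definition param_cube :: "nat \<Rightarrow> real \<Rightarrow> (nat \<Rightarrow> real) set" where
  "param_cube dd R = PiE {..<dd} (\<lambda>_. {-R..R})"

definition maxnorm_dist :: "nat \<Rightarrow> (nat \<Rightarrow> real) \<Rightarrow> (nat \<Rightarrow> real) \<Rightarrow> real" where
  "maxnorm_dist dd \<theta> \<phi> = Max (insert 0 ((\<lambda>i. \<bar>\<theta> i - \<phi> i\<bar>) ` {..<dd}))"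

definition emp_risk :: "nat \<Rightarrow> ((nat \<Rightarrow> real) \<Rightarrow> 'a \<Rightarrow> real) \<Rightarrow> (nat \<Rightarrow> 'w \<Rightarrow> 'a)
    \<Rightarrow> (nat \<Rightarrow> 'w \<Rightarrow> real) \<Rightarrow> (nat \<Rightarrow> real) \<Rightarrow> 'w \<Rightarrow> real" where
  "emp_risk M H X Y \<theta> \<omega> = (1 / real M) * (\<Sum>m=1..M. \<bar>H \<theta> (X m \<omega>) - Y m \<omega>\<bar>^2)"

definition risk :: "'w measure \<Rightarrow> (nat \<Rightarrow> 'w \<Rightarrow> 'a) \<Rightarrow> (nat \<Rightarrow> 'w \<Rightarrow> real) \<Rightarrow> ('a \<Rightarrow> real) \<Rightarrow> real" where
  "risk P X Y f = (\<integral>\<omega>. \<bar>f (X 1 \<omega>) - Y 1 \<omega>\<bar>^2 \<partial>P)"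

end

theory Submission
  imports Defs
begin

definition grid_pt :: "real \<Rightarrow> nat \<Rightarrow> nat \<Rightarrow> real" where
  "grid_pt R n k = - R + (2 * real k + 1) * R / real n"

definition grid :: "nat \<Rightarrow> real \<Rightarrow> nat \<Rightarrow> (nat \<Rightarrow> real) set" where
  "grid dd R n = PiE {..<dd} (\<lambda>_. grid_pt R n ` {..<n})"

lemma grid_finite: "finite (grid dd R n)"
  unfolding grid_def by (intro finite_PiE) auto

lemma grid_card: "card (grid dd R n) \<le> n ^ dd"
proof -
  have "card (grid dd R n) = (\<Prod>i\<in>{..<dd}. card (grid_pt R n ` {..<n}))"
    unfolding grid_def by (rule card_PiE) simp
  also have "\<dots> \<le> (\<Prod>i\<in>{..<dd}. n)"
    by (intro prod_mono) (auto intro: card_image_le[THEN order_trans])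
  finally show ?thesis by simp
qed

lemma grid_pt_in: assumes "R > 0" "k < n" shows "grid_pt R n k \<in> {-R..R}"
proof -
  have n: "real n > 0" using assms by simp
  have "(2 * real k + 1) * R / real n \<ge> 0" using assms by simp
  moreover have "(2 * real k + 1) * R / real n \<le> 2 * R"
  proof -
    have "(2 * real k + 1) * R \<le> 2 * R * real n"
      using assms by (simp add: mult_right_mono)
    then show ?thesis using n by (simp add: divide_le_eq)
  qed
  ultimately show ?thesis unfolding grid_pt_def by simp
qed

lemma grid_subset: assumes "R > 0" shows "grid dd R n \<subseteq> param_cube dd R"
  unfolding grid_def param_cube_def using grid_pt_in[OF assms]
  by (intro PiE_mono) auto

lemma grid_pt_approx:
  assumes "R > 0" "n \<ge> 1" "t \<in> {-R..R}"
  shows "\<exists>k<n. \<bar>t - grid_pt R n k\<bar> \<le> R / real n"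
proof -
  define s where "s = (t + R) * real n / (2 * R)"
  have n: "real n > 0" using assms by simp
  have s0: "s \<ge> 0" using assms unfolding s_def by simp
  have sn: "s \<le> real n" using assms n unfolding s_def by (simp add: divide_le_eq)
  define k where "k = min (n - 1) (nat \<lfloor>s\<rfloor>)"
  have kn: "k < n" using assms unfolding k_def by simp
  have h1: "\<bar>s - (real k + 1/2)\<bar> \<le> 1/2"
  proof (cases "s < real n")
    case True
    have "\<lfloor>s\<rfloor> < int n" using True floor_correct[of s] by linarith
    then have "nat \<lfloor>s\<rfloor> \<le> n - 1" by arith
    then have "k = nat \<lfloor>s\<rfloor>" unfolding k_def by simp
    then have "real k = of_int \<lfloor>s\<rfloor>" using s0 by simp
    then show ?thesis using floor_correct[of s] by linarith
  next
    case False
    then have "s = real n" using sn by simp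
    then have "k = n - 1" unfolding k_def by simp
    then have "real k = real n - 1" using assms by simp
    then show ?thesis using \<open>s = real n\<close> by simp
  qed
  have h2: "t - grid_pt R n k = (2 * R / real n) * (s - (real k + 1/2))"
    unfolding grid_pt_def s_def using n assms by (simp add: field_simps)
  have "\<bar>t - grid_pt R n k\<bar> \<le> (2 * R / real n) * (1/2)"
  proof -
    have e: "\<bar>2 * R / real n\<bar> = 2 * R / real n" using assms by simp
    show ?thesis using h1 h2 assms n
      by (simp only: abs_mult e) (rule mult_left_mono, auto)
  qed
  then show ?thesis using kn by auto
qed

lemma maxnorm_le:
  assumes "r \<ge> 0" "\<And>i. i < dd \<Longrightarrow> \<bar>\<theta> i - \<phi> i\<bar> \<le> r"
  shows "maxnorm_dist dd \<theta> \<phi> \<le> r"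
  unfolding maxnorm_dist_def using assms by (subst Max_le_iff) auto

lemma grid_approx:
  assumes "R > 0" "n \<ge> 1" "\<theta> \<in> param_cube dd R"
  shows "\<exists>\<phi>\<in>grid dd R n. maxnorm_dist dd \<theta> \<phi> \<le> R / real n"
proof -
  have "\<forall>i\<in>{..<dd}. \<exists>k. k < n \<and> \<bar>\<theta> i - grid_pt R n k\<bar> \<le> R / real n"
    using assms grid_pt_approx[OF assms(1,2)] unfolding param_cube_def by (auto simp: PiE_iff)
  then obtain f where f: "\<forall>i\<in>{..<dd}. f i < n \<and> \<bar>\<theta> i - grid_pt R n (f i)\<bar> \<le> R / real n"
    by metis
  define \<phi> where "\<phi> = restrict (\<lambda>i. grid_pt R n (f i)) {..<dd}"
  have "\<phi> \<in> grid dd R n" unfolding \<phi>_def grid_def using f by auto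
  moreover have "maxnorm_dist dd \<theta> \<phi> \<le> R / real n"
    using f assms by (intro maxnorm_le) (auto simp: \<phi>_def)
  ultimately show ?thesis by blast
qed

lemma sq_diff_bound:
  fixes a b :: real
  assumes "\<bar>a\<bar> \<le> c" "\<bar>b\<bar> \<le> c" "\<bar>a - b\<bar> \<le> e"
  shows "\<bar>\<bar>a\<bar>^2 - \<bar>b\<bar>^2\<bar> \<le> 2 * c * e"
proof -
  have "\<bar>\<bar>a\<bar>^2 - \<bar>b\<bar>^2\<bar> = \<bar>a - b\<bar> * \<bar>a + b\<bar>"
    by (simp add: power2_eq_square abs_mult[symmetric] algebra_simps)
  also have "\<dots> \<le> e * (2 * c)"
    using assms by (intro mult_mono) auto
  finally show ?thesis by (simp add: mult_ac)
qed

theorem lemma3p20: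
  fixes P :: "'w measure"
    and D :: "'a::euclidean_space set"
    and X :: "nat \<Rightarrow> 'w \<Rightarrow> 'a" and Y :: "nat \<Rightarrow> 'w \<Rightarrow> real"
    and H :: "(nat \<Rightarrow> real) \<Rightarrow> 'a \<Rightarrow> real"
    and dd M :: nat and R L RR \<epsilon> :: real
  assumes "1 \<le> dd" and "1 \<le> M"
    and "R > 0" and "L > 0" and "RR > 0" and "\<epsilon> > 0"
    and "compact D"
    and "prob_space P"
    and "\<And>m \<omega>. m \<in> {1..M} \<Longrightarrow> \<omega> \<in> space P \<Longrightarrow> X m \<omega> \<in> D"
    and "prob_space.indep_vars P (\<lambda>_. borel) (\<lambda>m \<omega>. (X m \<omega>, Y m \<omega>)) {1..M}"
    and "\<And>m. m \<in> {1..M} \<Longrightarrow>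
           distr P borel (\<lambda>\<omega>. (X m \<omega>, Y m \<omega>)) = distr P borel (\<lambda>\<omega>. (X 1 \<omega>, Y 1 \<omega>))"
    and "\<And>\<theta>. \<theta> \<in> param_cube dd R \<Longrightarrow> continuous_on D (H \<theta>)"
    and "\<And>\<theta> \<phi> x. \<theta> \<in> param_cube dd R \<Longrightarrow> \<phi> \<in> param_cube dd R \<Longrightarrow> x \<in> D \<Longrightarrow>
           \<bar>H \<theta> x - H \<phi> x\<bar> \<le> L * maxnorm_dist dd \<theta> \<phi>"
    and "\<And>\<theta> m \<omega>. \<theta> \<in> param_cube dd R \<Longrightarrow> m \<in> {1..M} \<Longrightarrow> \<omega> \<in> space P \<Longrightarrow>
           \<bar>H \<theta> (X m \<omega>) - Y m \<omega>\<bar> \<le> RR"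
    and "integrable P (\<lambda>\<omega>. \<bar>Y 1 \<omega>\<bar>^2)"
  shows "(\<lambda>\<omega>. SUP \<theta>\<in>param_cube dd R.
            ennreal \<bar>emp_risk M H X Y \<theta> \<omega> - risk P X Y (H \<theta>)\<bar>) \<in> borel_measurable P
    \<and> measure P {\<omega> \<in> space P. (SUP \<theta>\<in>param_cube dd R.
            ennreal \<bar>emp_risk M H X Y \<theta> \<omega> - risk P X Y (H \<theta>)\<bar>) \<ge> ennreal \<epsilon>}
      \<le> 2 * max 1 ((32 * L * R * RR / \<epsilon>) ^ dd) * exp (- (\<epsilon>^2 * real M) / (2 * RR^4))"
proof -
  interpret P: prob_space P by fact
  let ?cube = "param_cube dd R"
  define g where "g \<theta> = (\<lambda>p::'a\<times>real. indicator (D \<times> UNIV) p *\<^sub>R (\<bar>H \<theta> (fst p) - snd p\<bar>^2))" for \<theta>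
  define Z where "Z \<theta> m \<omega> = g \<theta> (X m \<omega>, Y m \<omega>)" for \<theta> m \<omega>
  have Zfun: "Z \<theta> m = (\<lambda>\<omega>. g \<theta> (X m \<omega>, Y m \<omega>))" for \<theta> m
    by (simp add: Z_def fun_eq_iff)
  have M1: "1 \<in> {1..M}" using assms(2) by simp
  have Zeq: "Z \<theta> m \<omega> = \<bar>H \<theta> (X m \<omega>) - Y m \<omega>\<bar>^2" if "m \<in> {1..M}" "\<omega> \<in> space P" for \<theta> m \<omega>
    using assms(9)[OF that] by (simp add: Z_def g_def indicator_def)
  have gmeas: "g \<theta> \<in> borel_measurable borel" if "\<theta> \<in> ?cube" for \<theta>
  proof -
    have c: "continuous_on (D \<times> UNIV) (\<lambda>p::'a\<times>real. \<bar>H \<theta> (fst p) - snd p\<bar>^2)"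
      by (intro continuous_intros continuous_on_compose2[OF assms(12)[OF that]]) auto
    have "D \<times> (UNIV::real set) \<in> sets borel"
      using assms(7) by (intro borel_closed closed_Times) (auto simp: compact_imp_closed)
    from borel_measurable_continuous_on_indicator[OF this c] show ?thesis unfolding g_def .
  qed
  have pmeas: "(\<lambda>\<omega>. (X m \<omega>, Y m \<omega>)) \<in> borel_measurable P" if "m \<in> {1..M}" for m
    using assms(10) that unfolding P.indep_vars_def by auto
  have Zmeas: "Z \<theta> m \<in> borel_measurable P" if "\<theta> \<in> ?cube" "m \<in> {1..M}" for \<theta> m
    unfolding Z_def using measurable_comp[OF pmeas[OF that(2)] gmeas[OF that(1)]] by (simp add: o_def)
  have Zind: "P.indep_vars (\<lambda>_. borel) (Z \<theta>) {1..M}" if "\<theta> \<in> ?cube" for \<theta>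
    unfolding Z_def using P.indep_vars_compose2[OF assms(10), of "\<lambda>_. g \<theta>" "\<lambda>_. borel"] gmeas[OF that]
    by simp
  have Zdistr: "distr P borel (Z \<theta> m) = distr P borel (Z \<theta> 1)" if "\<theta> \<in> ?cube" "m \<in> {1..M}" for \<theta> m
  proof -
    have "distr P borel (Z \<theta> m) = distr (distr P borel (\<lambda>\<omega>. (X m \<omega>, Y m \<omega>))) borel (g \<theta>)"
      using distr_distr[OF gmeas[OF that(1)] pmeas[OF that(2)]] by (simp add: Zfun o_def)
    also have "\<dots> = distr (distr P borel (\<lambda>\<omega>. (X 1 \<omega>, Y 1 \<omega>))) borel (g \<theta>)"
      using assms(11)[OF that(2)] by simp
    also have "\<dots> = distr P borel (Z \<theta> 1)"
      using distr_distr[OF gmeas[OF that(1)] pmeas[OF M1]] by (simp add: Zfun o_def)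
    finally show ?thesis .
  qed
  have Zbd: "Z \<theta> m \<omega> \<in> {0..RR^2}" if "\<theta> \<in> ?cube" "m \<in> {1..M}" "\<omega> \<in> space P" for \<theta> m \<omega>
  proof -
    have "\<bar>H \<theta> (X m \<omega>) - Y m \<omega>\<bar> \<le> RR" using assms(14)[OF that] .
    then have "\<bar>H \<theta> (X m \<omega>) - Y m \<omega>\<bar>^2 \<le> RR^2" by (intro power_mono) auto
    then show ?thesis using Zeq[OF that(2,3)] by simp
  qed
  have Zint: "integrable P (Z \<theta> m)" if "\<theta> \<in> ?cube" "m \<in> {1..M}" for \<theta> m
    using Zbd[OF that] Zmeas[OF that] by (intro P.integrable_const_bound[where B="RR^2"]) auto
  have riskeq: "risk P X Y (H \<theta>) = P.expectation (Z \<theta> 1)" for \<theta>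
    unfolding risk_def by (intro Bochner_Integration.integral_cong refl) (rule sym, erule Zeq[OF M1])
  have empeq: "emp_risk M H X Y \<theta> \<omega> = (\<Sum>m\<in>{1..M}. Z \<theta> m \<omega>) / real M" if "\<omega> \<in> space P" for \<theta> \<omega>
    unfolding emp_risk_def using Zeq[OF _ that] by simp
  have hoeff: "P.prob {\<omega> \<in> space P. \<bar>emp_risk M H X Y \<theta> \<omega> - risk P X Y (H \<theta>)\<bar> \<ge> \<epsilon>/2}
      \<le> 2 * exp (- (\<epsilon>^2 * real M) / (2 * RR^4))" if "\<theta> \<in> ?cube" for \<theta>
  proof -
    interpret Hf: Hoeffding_ineq_iid P "{1..M}" "Z \<theta>" "Z \<theta> 1" 0 "RR^2" "P.expectation (Z \<theta> 1)"
      apply unfold_locales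
      apply simp
      apply (rule Zind[OF that])
      apply (erule Zdistr[OF that])
      apply (rule Zmeas[OF that M1])
      apply (rule AE_I2)
      apply (erule Zbd[OF that M1])
      apply (rule Pure.reflexive)
      done
    have "P.prob {x\<in>space P. \<bar>(\<Sum>i\<in>{1..M}. Z \<theta> i x) / real (card {1..M}) - P.expectation (Z \<theta> 1)\<bar> \<ge> \<epsilon>/2}
        \<le> 2 * exp (-2 * real (card {1..M}) * (\<epsilon>/2)^2 / (RR^2 - 0)^2)"
      by (rule Hf.Hoeffding_ineq_abs_ge') (use assms in auto)
    moreover have "-2 * real (card {1..M}) * (\<epsilon>/2)^2 / (RR^2 - 0)^2 = - (\<epsilon>^2 * real M) / (2 * RR^4)"
      using assms(2,5) by (simp add: power_divide flip: power_mult)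
    moreover have "{x\<in>space P. \<bar>(\<Sum>i\<in>{1..M}. Z \<theta> i x) / real (card {1..M}) - P.expectation (Z \<theta> 1)\<bar> \<ge> \<epsilon>/2}
       = {\<omega> \<in> space P. \<bar>emp_risk M H X Y \<theta> \<omega> - risk P X Y (H \<theta>)\<bar> \<ge> \<epsilon>/2}"
      by (intro Collect_cong conj_cong refl) (simp add: empeq riskeq)
    ultimately show ?thesis by simp
  qed
  define dst where "dst = maxnorm_dist dd"
  define d where "d \<theta> \<omega> = emp_risk M H X Y \<theta> \<omega> - risk P X Y (H \<theta>)" for \<theta> \<omega>
  have Zlip: "\<bar>Z \<theta> m \<omega> - Z \<phi> m \<omega>\<bar> \<le> 2 * RR * (L * dst \<theta> \<phi>)"
    if "\<theta> \<in> ?cube" "\<phi> \<in> ?cube" "m \<in> {1..M}" "\<omega> \<in> space P" for \<theta> \<phi> m \<omega>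
  proof -
    have "\<bar>\<bar>H \<theta> (X m \<omega>) - Y m \<omega>\<bar>^2 - \<bar>H \<phi> (X m \<omega>) - Y m \<omega>\<bar>^2\<bar> \<le> 2 * RR * (L * dst \<theta> \<phi>)"
      using assms(13)[OF that(1,2) assms(9)[OF that(3,4)]]
      by (intro sq_diff_bound assms(14) that) (auto simp: dst_def)
    then show ?thesis using Zeq[OF that(3,4)] by simp
  qed
  have emplip: "\<bar>emp_risk M H X Y \<theta> \<omega> - emp_risk M H X Y \<phi> \<omega>\<bar> \<le> 2 * RR * (L * dst \<theta> \<phi>)"
    if "\<theta> \<in> ?cube" "\<phi> \<in> ?cube" "\<omega> \<in> space P" for \<theta> \<phi> \<omega>
  proof -
    have "\<bar>\<Sum>m\<in>{1..M}. Z \<theta> m \<omega> - Z \<phi> m \<omega>\<bar> \<le> (\<Sum>m\<in>{1..M}. \<bar>Z \<theta> m \<omega> - Z \<phi> m \<omega>\<bar>)"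
      by (rule sum_abs)
    also have "\<dots> \<le> (\<Sum>m\<in>{1..M}. 2 * RR * (L * dst \<theta> \<phi>))"
      by (intro sum_mono Zlip that) auto
    also have "\<dots> = real M * (2 * RR * (L * dst \<theta> \<phi>))" by simp
    finally have "\<bar>\<Sum>m\<in>{1..M}. Z \<theta> m \<omega> - Z \<phi> m \<omega>\<bar> \<le> real M * (2 * RR * (L * dst \<theta> \<phi>))" .
    moreover have "emp_risk M H X Y \<theta> \<omega> - emp_risk M H X Y \<phi> \<omega> = (\<Sum>m\<in>{1..M}. Z \<theta> m \<omega> - Z \<phi> m \<omega>) / real M"
      using empeq[OF that(3)] by (simp add: sum_subtractf diff_divide_distrib)
    ultimately show ?thesis using assms(2) by (simp add: divide_le_eq mult.commute)
  qed
  have risklip: "\<bar>risk P X Y (H \<theta>) - risk P X Y (H \<phi>)\<bar> \<le> 2 * RR * (L * dst \<theta> \<phi>)"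
    if "\<theta> \<in> ?cube" "\<phi> \<in> ?cube" for \<theta> \<phi>
  proof -
    let ?c = "2 * RR * (L * dst \<theta> \<phi>)"
    have e: "risk P X Y (H \<theta>) - risk P X Y (H \<phi>) = P.expectation (\<lambda>\<omega>. Z \<theta> 1 \<omega> - Z \<phi> 1 \<omega>)"
      unfolding riskeq by (rule Bochner_Integration.integral_diff[symmetric]) (intro Zint that M1)+
    have pw: "- ?c \<le> Z \<theta> 1 \<omega> - Z \<phi> 1 \<omega> \<and> Z \<theta> 1 \<omega> - Z \<phi> 1 \<omega> \<le> ?c" if "\<omega> \<in> space P" for \<omega>
      using Zlip[OF \<open>\<theta> \<in> ?cube\<close> \<open>\<phi> \<in> ?cube\<close> M1 that] by linarith
    have "P.expectation (\<lambda>\<omega>. Z \<theta> 1 \<omega> - Z \<phi> 1 \<omega>) \<le> P.expectation (\<lambda>\<omega>. ?c)"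
      using pw by (intro integral_mono Bochner_Integration.integrable_diff Zint that M1) auto
    moreover have "P.expectation (\<lambda>\<omega>. - ?c) \<le> P.expectation (\<lambda>\<omega>. Z \<theta> 1 \<omega> - Z \<phi> 1 \<omega>)"
      using pw by (intro integral_mono Bochner_Integration.integrable_diff Zint that M1) auto
    ultimately show ?thesis unfolding e by (simp add: abs_le_iff P.prob_space)
  qed
  have dlip: "\<bar>d \<theta> \<omega>\<bar> \<le> \<bar>d \<phi> \<omega>\<bar> + 4 * RR * L * dst \<theta> \<phi>"
    if "\<theta> \<in> ?cube" "\<phi> \<in> ?cube" "\<omega> \<in> space P" for \<theta> \<phi> \<omega>
    using emplip[OF that] risklip[OF that(1,2)] unfolding d_def by (simp add: abs_le_iff) linarith
  have empmeas: "(\<lambda>\<omega>. emp_risk M H X Y \<theta> \<omega>) \<in> borel_measurable P" if "\<theta> \<in> ?cube" for \<theta>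
  proof -
    have "(\<lambda>\<omega>. (\<Sum>m\<in>{1..M}. Z \<theta> m \<omega>) / real M) \<in> borel_measurable P"
      using Zmeas[OF that] by measurable
    then show ?thesis by (subst measurable_cong[OF empeq]) auto
  qed
  have Fmeas: "(\<lambda>\<omega>. ennreal \<bar>d \<theta> \<omega>\<bar>) \<in> borel_measurable P" if "\<theta> \<in> ?cube" for \<theta>
    unfolding d_def using empmeas[OF that] by measurable
  define C where "C = (\<Union>n\<in>{1::nat..}. grid dd R n)"
  have Csub: "C \<subseteq> ?cube" unfolding C_def using grid_subset[OF assms(3)] by blast
  have Ccount: "countable C" unfolding C_def
    by (intro countable_UN[OF countable_subset[OF subset_UNIV countableI_type]] countable_finite grid_finite)
  have Seq: "(SUP \<theta>\<in>?cube. ennreal \<bar>d \<theta> \<omega>\<bar>) = (SUP \<theta>\<in>C. ennreal \<bar>d \<theta> \<omega>\<bar>)" if \<omega>: "\<omega> \<in> space P" for \<omega>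
  proof (rule antisym)
    show "(SUP \<theta>\<in>?cube. ennreal \<bar>d \<theta> \<omega>\<bar>) \<le> (SUP \<theta>\<in>C. ennreal \<bar>d \<theta> \<omega>\<bar>)"
    proof (rule SUP_least)
      fix \<theta> assume \<theta>: "\<theta> \<in> ?cube"
      show "ennreal \<bar>d \<theta> \<omega>\<bar> \<le> (SUP \<theta>\<in>C. ennreal \<bar>d \<theta> \<omega>\<bar>)"
      proof (rule ennreal_le_epsilon)
        fix e :: real assume e: "0 < e"
        define n where "n = nat \<lceil>4 * RR * L * R / e\<rceil> + 1"
        have n1: "n \<ge> 1" by (simp add: n_def)
        have "4 * RR * L * R / e \<le> real n"
          using real_nat_ceiling_ge[of "4 * RR * L * R / e"] by (simp add: n_def)
        then have "4 * RR * L * R \<le> e * real n" using e by (simp add: divide_le_eq mult.commute)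
        have n0: "real n > 0" using n1 by simp
        have ne: "4 * RR * L * (R / real n) \<le> e"
          using \<open>4 * RR * L * R \<le> e * real n\<close> n0 by (simp add: pos_divide_le_eq)
        obtain \<phi> where \<phi>: "\<phi> \<in> grid dd R n" "dst \<theta> \<phi> \<le> R / real n"
          using grid_approx[OF assms(3) n1 \<theta>] unfolding dst_def by blast
        have \<phi>C: "\<phi> \<in> C" using \<phi> n1 unfolding C_def by auto
        have \<phi>cube: "\<phi> \<in> ?cube" using \<phi>C Csub by auto
        have "4 * RR * L * dst \<theta> \<phi> \<le> 4 * RR * L * (R / real n)"
          using \<phi>(2) assms(4,5) by (intro mult_left_mono) auto
        then have "\<bar>d \<theta> \<omega>\<bar> \<le> \<bar>d \<phi> \<omega>\<bar> + e" using dlip[OF \<theta> \<phi>cube \<omega>] ne by linarith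
        then have "ennreal \<bar>d \<theta> \<omega>\<bar> \<le> ennreal (\<bar>d \<phi> \<omega>\<bar> + e)"
          by (rule ennreal_leI)
        also have "\<dots> = ennreal \<bar>d \<phi> \<omega>\<bar> + ennreal e"
          using e by (intro ennreal_plus) auto
        also have "\<dots> \<le> (SUP \<theta>\<in>C. ennreal \<bar>d \<theta> \<omega>\<bar>) + ennreal e"
          by (intro add_right_mono SUP_upper \<phi>C)
        finally show "ennreal \<bar>d \<theta> \<omega>\<bar> \<le> (SUP \<theta>\<in>C. ennreal \<bar>d \<theta> \<omega>\<bar>) + ennreal e" .
      qed
    qed
  next
    show "(SUP \<theta>\<in>C. ennreal \<bar>d \<theta> \<omega>\<bar>) \<le> (SUP \<theta>\<in>?cube. ennreal \<bar>d \<theta> \<omega>\<bar>)"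
      by (rule SUP_subset_mono[OF Csub order_refl])
  qed
  have Smeas: "(\<lambda>\<omega>. SUP \<theta>\<in>?cube. ennreal \<bar>d \<theta> \<omega>\<bar>) \<in> borel_measurable P"
  proof -
    have "(\<lambda>\<omega>. SUP \<theta>\<in>C. ennreal \<bar>d \<theta> \<omega>\<bar>) \<in> borel_measurable P"
      by (rule borel_measurable_SUP[OF Ccount]) (use Fmeas Csub in auto)
    then show ?thesis by (subst measurable_cong[OF Seq]) auto
  qed
  define x where "x = 16 * L * R * RR / \<epsilon>"
  have x0: "x > 0" unfolding x_def using assms(3-6) by simp
  define n where "n = nat \<lceil>x\<rceil>"
  have xn: "x \<le> real n" unfolding n_def by (rule real_nat_ceiling_ge)
  have n1: "n \<ge> 1" using xn x0 by simp
  have nr: "4 * RR * L * (R / real n) \<le> \<epsilon> / 4"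
  proof -
    have "R / real n \<le> R / x" using xn x0 assms(3) by (intro divide_left_mono) auto
    moreover have "4 * RR * L * (R / x) = \<epsilon> / 4" unfolding x_def using assms(3-6) by (simp add: field_simps)
    moreover have "4 * RR * L * (R / real n) \<le> 4 * RR * L * (R / x)"
      using calculation(1) assms(4,5) by (intro mult_left_mono) auto
    ultimately show ?thesis by linarith
  qed
  have Ameas: "{\<omega> \<in> space P. \<epsilon>/2 \<le> \<bar>d \<phi> \<omega>\<bar>} \<in> sets P" if "\<phi> \<in> ?cube" for \<phi>
    unfolding d_def using empmeas[OF that] by measurable
  have sub: "{\<omega> \<in> space P. (SUP \<theta>\<in>?cube. ennreal \<bar>d \<theta> \<omega>\<bar>) \<ge> ennreal \<epsilon>}
      \<subseteq> (\<Union>\<phi>\<in>grid dd R n. {\<omega> \<in> space P. \<epsilon>/2 \<le> \<bar>d \<phi> \<omega>\<bar>})"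
  proof
    fix \<omega> assume "\<omega> \<in> {\<omega> \<in> space P. (SUP \<theta>\<in>?cube. ennreal \<bar>d \<theta> \<omega>\<bar>) \<ge> ennreal \<epsilon>}"
    then have \<omega>: "\<omega> \<in> space P" and S: "(SUP \<theta>\<in>?cube. ennreal \<bar>d \<theta> \<omega>\<bar>) \<ge> ennreal \<epsilon>" by auto
    have "ennreal (3 * \<epsilon> / 4) < ennreal \<epsilon>" using assms(6) by (intro ennreal_lessI) auto
    then have "ennreal (3 * \<epsilon> / 4) < (SUP \<theta>\<in>?cube. ennreal \<bar>d \<theta> \<omega>\<bar>)" using S by (rule order_less_le_trans)
    then obtain \<theta> where \<theta>: "\<theta> \<in> ?cube" "ennreal (3 * \<epsilon> / 4) < ennreal \<bar>d \<theta> \<omega>\<bar>"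
      by (auto simp: less_SUP_iff)
    then have t: "3 * \<epsilon> / 4 < \<bar>d \<theta> \<omega>\<bar>" using assms(6) by (simp add: ennreal_less_iff)
    obtain \<phi> where \<phi>: "\<phi> \<in> grid dd R n" "dst \<theta> \<phi> \<le> R / real n"
      using grid_approx[OF assms(3) n1 \<theta>(1)] unfolding dst_def by blast
    have \<phi>cube: "\<phi> \<in> ?cube" using \<phi>(1) grid_subset[OF assms(3)] by auto
    have "4 * RR * L * dst \<theta> \<phi> \<le> 4 * RR * L * (R / real n)"
      using \<phi>(2) assms(4,5) by (intro mult_left_mono) auto
    then have "\<epsilon>/2 \<le> \<bar>d \<phi> \<omega>\<bar>" using dlip[OF \<theta>(1) \<phi>cube \<omega>] nr t by linarith
    then show "\<omega> \<in> (\<Union>\<phi>\<in>grid dd R n. {\<omega> \<in> space P. \<epsilon>/2 \<le> \<bar>d \<phi> \<omega>\<bar>})" using \<phi>(1) \<omega> by auto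
  qed
  have gsub: "grid dd R n \<subseteq> ?cube" by (rule grid_subset[OF assms(3)])
  have cardle: "real (card (grid dd R n)) \<le> max 1 ((32 * L * R * RR / \<epsilon>) ^ dd)"
  proof -
    have "real (card (grid dd R n)) \<le> real n ^ dd" using grid_card[of dd R n]
      by (metis of_nat_le_iff of_nat_power)
    also have "\<dots> \<le> max 1 ((32 * L * R * RR / \<epsilon>) ^ dd)"
    proof (cases "x \<le> 1")
      case True
      then have "\<lceil>x\<rceil> \<le> 1" by (simp add: ceiling_le_iff)
      then have "n \<le> 1" unfolding n_def by simp
      then have "n = 1" using n1 by simp
      then show ?thesis by simp
    next
      case False
      have "real n \<le> x + 1" unfolding n_def using ceiling_correct[of x] x0 by linarith
      also have "\<dots> \<le> 2 * x" using False by simp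
      also have "\<dots> = 32 * L * R * RR / \<epsilon>" unfolding x_def by simp
      finally have "real n ^ dd \<le> (32 * L * R * RR / \<epsilon>) ^ dd" by (intro power_mono) auto
      then show ?thesis by simp
    qed
    finally show ?thesis .
  qed
  have "P.prob {\<omega> \<in> space P. (SUP \<theta>\<in>?cube. ennreal \<bar>d \<theta> \<omega>\<bar>) \<ge> ennreal \<epsilon>}
      \<le> P.prob (\<Union>\<phi>\<in>grid dd R n. {\<omega> \<in> space P. \<epsilon>/2 \<le> \<bar>d \<phi> \<omega>\<bar>})"
    using sub Ameas gsub grid_finite by (intro P.finite_measure_mono sets.finite_UN) auto
  also have "\<dots> \<le> (\<Sum>\<phi>\<in>grid dd R n. P.prob {\<omega> \<in> space P. \<epsilon>/2 \<le> \<bar>d \<phi> \<omega>\<bar>})"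
    using Ameas gsub by (intro P.finite_measure_subadditive_finite grid_finite) auto
  also have "\<dots> \<le> real (card (grid dd R n)) * (2 * exp (- (\<epsilon>^2 * real M) / (2 * RR^4)))"
    using hoeff gsub unfolding d_def by (intro sum_bounded_above) auto
  also have "\<dots> \<le> max 1 ((32 * L * R * RR / \<epsilon>) ^ dd) * (2 * exp (- (\<epsilon>^2 * real M) / (2 * RR^4)))"
    by (intro mult_right_mono cardle) auto
  finally have bound: "P.prob {\<omega> \<in> space P. (SUP \<theta>\<in>?cube. ennreal \<bar>d \<theta> \<omega>\<bar>) \<ge> ennreal \<epsilon>}
      \<le> 2 * max 1 ((32 * L * R * RR / \<epsilon>) ^ dd) * exp (- (\<epsilon>^2 * real M) / (2 * RR^4))"
    by (simp add: mult_ac)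
  show ?thesis using Smeas bound unfolding d_def by simp
qed

end
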